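(* Let $S$ be a virtual flat biquandle, $C_n(S)$ the free abelian group on $n$-tuples of elements of $S$ ($C_0(S)=0$), with boundary $\partial_n$ given by $\partial_n=0$ for $n\le 1$ and for $n\ge2$ $$\partial_n(a_1,\dots,a_n)=\sum_{i=1}^n(-1)^i\big((a_1\ast a_i,\dots,a_{i-1}\ast a_i,a_{i+1},\dots,a_n)-(a_1,\dots,a_{i-1},a_{i+1}\circ a_i,\dots,a_n\circ a_i)\big).$$ Let $C_n'(S)\subset C_n(S)$ be the subgroup generated by the elements $(a_1,\dots,a_i,a_{i+1},\dots,a_n)+(a_1,\dots,a_{i+1}\circ a_i,a_i\ast a_{i+1},\dots,a_n)$ for $n\ge2$ (all $a_j\in S$, $1\le i\le n-1$), and $C_n'(S)=0$ for $n\le1$. Then $\partial_n(C_n'(S))\subset C_{n-1}'(S)$ for all $n$, so $\{C_n'(S),\partial_n\}$ is a sub-complex of $\{C_n(S),\partial_n\}$.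
   Context: A virtual flat biquandle is a set $S$ with two binary operations $a\ast b$, $a\circ b$; writing $S_b(a)=a\ast b$, $T_b(a)=a\circ b$, for all $a,b\in S$: (1) $S_aS_b=S_bS_a$, $T_aT_b=T_bT_a$, $S_aT_b=T_bS_a$; (2) $S_a=S_{T_b(a)}=S_{S_b(a)}$, $T_a=T_{S_b(a)}=T_{T_b(a)}$; (3) $T_aS_a=S_aT_a=\mathrm{id}$. The maps $\partial_n$ satisfy $\partial_{n-1}\partial_n=0$. *)

theory Defs
  imports "HOL-Algebra.Free_Abelian_Groups"
begin

text \<open>A virtual flat biquandle structure on the type 'a, with
  star a b = a * b  (= S_b(a)) and circ a b = a o b (= T_b(a)).\<close>

definition virtual_flat_biquandle :: "('a \<Rightarrow> 'a \<Rightarrow> 'a) \<Rightarrow> ('a \<Rightarrow> 'a \<Rightarrow> 'a) \<Rightarrow> bool" where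
  "virtual_flat_biquandle star circ \<longleftrightarrow>
     (\<forall>a b x. star (star x b) a = star (star x a) b) \<and>
     (\<forall>a b x. circ (circ x b) a = circ (circ x a) b) \<and>
     (\<forall>a b x. star (circ x b) a = circ (star x a) b) \<and>
     (\<forall>a b x. star x a = star x (circ a b) \<and> star x a = star x (star a b)) \<and>
     (\<forall>a b x. circ x a = circ x (star a b) \<and> circ x a = circ x (circ a b)) \<and>
     (\<forall>a x. circ (star x a) a = x \<and> star (circ x a) a = x)"

definition chain_group :: "nat \<Rightarrow> ('a list \<Rightarrow>\<^sub>0 int) monoid" where
  "chain_group n = (if n = 0 then free_Abelian_group {} else free_Abelian_group {xs. length xs = n})"

text \<open>Boundary of a basis tuple (a_1,...,a_n), n >= 2; index i (0-based) corresponds to i+1.\<close>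

definition bd_tuple :: "('a \<Rightarrow> 'a \<Rightarrow> 'a) \<Rightarrow> ('a \<Rightarrow> 'a \<Rightarrow> 'a) \<Rightarrow> 'a list \<Rightarrow> ('a list \<Rightarrow>\<^sub>0 int)" where
  "bd_tuple star circ xs =
     (\<Sum>i<length xs. frag_cmul ((-1) ^ (i + 1))
        (frag_of (map (\<lambda>x. star x (xs ! i)) (take i xs) @ drop (Suc i) xs)
         - frag_of (take i xs @ map (\<lambda>x. circ x (xs ! i)) (drop (Suc i) xs))))"

definition boundary :: "('a \<Rightarrow> 'a \<Rightarrow> 'a) \<Rightarrow> ('a \<Rightarrow> 'a \<Rightarrow> 'a) \<Rightarrow> nat \<Rightarrow> ('a list \<Rightarrow>\<^sub>0 int) \<Rightarrow> ('a list \<Rightarrow>\<^sub>0 int)" where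
  "boundary star circ n c = (if n \<le> 1 then 0 else frag_extend (bd_tuple star circ) c)"

definition degen_gens :: "('a \<Rightarrow> 'a \<Rightarrow> 'a) \<Rightarrow> ('a \<Rightarrow> 'a \<Rightarrow> 'a) \<Rightarrow> nat \<Rightarrow> ('a list \<Rightarrow>\<^sub>0 int) set" where
  "degen_gens star circ n =
     {frag_of xs + frag_of (take i xs @ [circ (xs ! Suc i) (xs ! i), star (xs ! i) (xs ! Suc i)] @ drop (Suc (Suc i)) xs)
      | xs i. length xs = n \<and> Suc i < n}"

definition degen_chains :: "('a \<Rightarrow> 'a \<Rightarrow> 'a) \<Rightarrow> ('a \<Rightarrow> 'a \<Rightarrow> 'a) \<Rightarrow> nat \<Rightarrow> ('a list \<Rightarrow>\<^sub>0 int) set" where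
  "degen_chains star circ n =
     (if n \<le> 1 then {0} else carrier (subgroup_generated (chain_group n) (degen_gens star circ n)))"

end

theory Submission
  imports Defs
begin

definition LL :: "('a \<Rightarrow> 'a \<Rightarrow> 'a) \<Rightarrow> nat \<Rightarrow> 'a list \<Rightarrow> 'a list" where
  "LL star j zs = map (\<lambda>x. star x (zs ! j)) (take j zs) @ drop (Suc j) zs"
definition RR :: "('a \<Rightarrow> 'a \<Rightarrow> 'a) \<Rightarrow> nat \<Rightarrow> 'a list \<Rightarrow> 'a list" where
  "RR circ j zs = take j zs @ map (\<lambda>x. circ x (zs ! j)) (drop (Suc j) zs)"
definition TT :: "('a \<Rightarrow> 'a \<Rightarrow> 'a) \<Rightarrow> ('a \<Rightarrow> 'a \<Rightarrow> 'a) \<Rightarrow> 'a list \<Rightarrow> nat \<Rightarrow> ('a list \<Rightarrow>\<^sub>0 int)" where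
  "TT star circ zs j = frag_cmul ((-1) ^ (j + 1)) (frag_of (LL star j zs) - frag_of (RR circ j zs))"

lemma bd_TT: "bd_tuple star circ zs = sum (TT star circ zs) {..<length zs}"
  by (simp add: bd_tuple_def TT_def LL_def RR_def)

lemma t1: "j < length p \<Longrightarrow> LL star j (p @ a # b # q) = (map (\<lambda>x. star x (p!j)) (take j p) @ drop (Suc j) p) @ a # b # q"
  by (simp add: LL_def nth_append)
lemma t2: "j < length p \<Longrightarrow> RR circ j (p @ a # b # q) = (take j p @ map (\<lambda>x. circ x (p!j)) (drop (Suc j) p)) @ circ a (p!j) # circ b (p!j) # map (\<lambda>x. circ x (p!j)) q"
  by (simp add: RR_def nth_append)
lemma t3: "j = length p + 2 + k \<Longrightarrow> k < length q \<Longrightarrow> LL star j (p @ a # b # q) = map (\<lambda>x. star x (q!k)) p @ star a (q!k) # star b (q!k) # (map (\<lambda>x. star x (q!k)) (take k q) @ drop (Suc k) q)"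
  by (simp add: LL_def nth_append numeral_3_eq_3)
lemma t4: "j = length p + 2 + k \<Longrightarrow> k < length q \<Longrightarrow> RR circ j (p @ a # b # q) = p @ a # b # (take k q @ map (\<lambda>x. circ x (q!k)) (drop (Suc k) q))"
  by (simp add: RR_def nth_append numeral_3_eq_3)
lemma t5: "LL star (length p) (p @ a # b # q) = map (\<lambda>x. star x a) p @ b # q"
  by (simp add: LL_def nth_append)
lemma t6: "RR circ (length p) (p @ a # b # q) = p @ circ b a # map (\<lambda>x. circ x a) q"
  by (simp add: RR_def nth_append)
lemma t7: "LL star (Suc (length p)) (p @ a # b # q) = map (\<lambda>x. star x b) p @ star a b # q"
  by (simp add: LL_def nth_append)
lemma t8: "RR circ (Suc (length p)) (p @ a # b # q) = p @ a # map (\<lambda>x. circ x b) q"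
  by (simp add: RR_def nth_append)

lemma GM: "length u + 2 + length w = m \<Longrightarrow>
   frag_of (u@x#y#w) + frag_of (u @ circ y x # star x y # w) \<in> degen_gens star circ m"
  unfolding degen_gens_def
  apply (rule CollectI)
  apply (rule exI[where x="u@x#y#w"])
  apply (rule exI[where x="length u"])
  by (auto simp: nth_append)

lemma D_carrier: "m \<ge> 1 \<Longrightarrow> degen_gens star circ m \<subseteq> carrier (chain_group m)"
  unfolding degen_gens_def chain_group_def
  by (auto simp: keys_frag_of dest!: subsetD[OF keys_add])

lemma Z_gen: "m \<ge> 2 \<Longrightarrow> degen_chains star circ m = generate (chain_group m) (degen_gens star circ m)"
  unfolding degen_chains_def carrier_subgroup_generated
  using D_carrier[of m star circ] by (simp add: Int_absorb1)

lemma grp: "group (chain_group m)"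
  by (simp add: chain_group_def)

lemma Z_0: "0 \<in> degen_chains star circ m"
proof (cases "m \<ge> 2")
  case True
  have "\<one>\<^bsub>chain_group m\<^esub> \<in> generate (chain_group m) (degen_gens star circ m)"
    by (rule generate.one)
  then show ?thesis using True by (simp add: Z_gen chain_group_def)
qed (simp add: degen_chains_def)

lemma Z_add: "x \<in> degen_chains star circ m \<Longrightarrow> y \<in> degen_chains star circ m \<Longrightarrow> x + y \<in> degen_chains star circ m"
proof (cases "m \<ge> 2")
  case True
  assume "x \<in> degen_chains star circ m" "y \<in> degen_chains star circ m"
  then have "x \<otimes>\<^bsub>chain_group m\<^esub> y \<in> generate (chain_group m) (degen_gens star circ m)"
    using True by (simp add: Z_gen generate.eng)
  then show ?thesis using True by (simp add: Z_gen chain_group_def)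
qed (simp add: degen_chains_def)

lemma Z_neg: "x \<in> degen_chains star circ m \<Longrightarrow> - x \<in> degen_chains star circ m"
proof (cases "m \<ge> 2")
  case True
  assume x: "x \<in> degen_chains star circ m"
  have sub: "degen_gens star circ m \<subseteq> carrier (chain_group m)" using D_carrier[of m star circ] True by auto
  have xg: "x \<in> generate (chain_group m) (degen_gens star circ m)" using x True by (simp add: Z_gen)
  have "inv\<^bsub>chain_group m\<^esub> x \<in> generate (chain_group m) (degen_gens star circ m)"
    by (rule group.generate_m_inv_closed[OF grp sub xg])
  moreover have "x \<in> carrier (chain_group m)"
    by (rule group.generate_in_carrier[OF grp sub xg])
  ultimately show ?thesis using True by (simp add: Z_gen chain_group_def)
qed (simp add: degen_chains_def)

lemma Z_incl: "m \<ge> 2 \<Longrightarrow> x \<in> degen_gens star circ m \<Longrightarrow> x \<in> degen_chains star circ m"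
  by (simp add: Z_gen generate.incl)

lemma Z_diff: "x \<in> degen_chains star circ m \<Longrightarrow> y \<in> degen_chains star circ m \<Longrightarrow> x - y \<in> degen_chains star circ m"
  using Z_add[OF _ Z_neg] by (metis diff_conv_add_uminus)

lemma Z_sign: "x \<in> degen_chains star circ m \<Longrightarrow> frag_cmul ((-1) ^ k) x \<in> degen_chains star circ m"
  by (cases "even k") (auto simp: Z_neg)

lemma Z_sum: "finite A \<Longrightarrow> (\<And>j. j \<in> A \<Longrightarrow> f j \<in> degen_chains star circ m) \<Longrightarrow> sum f A \<in> degen_chains star circ m"
  by (induction A rule: finite_induct) (auto simp: Z_0 Z_add)

lemma cancel4: "(u::'b::ab_group_add) + v + (- v + - u) = 0"
  by (simp add: algebra_simps)

lemma cmul_comb: "frag_cmul s (x - y) + frag_cmul s (z - w) = frag_cmul s ((x + z) - (y + w))"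
  by (rule poly_mapping_eqI) (simp add: lookup_add lookup_minus algebra_simps)

context
  fixes star circ :: "'a \<Rightarrow> 'a \<Rightarrow> 'a"
  assumes V: "virtual_flat_biquandle star circ"
begin

lemma A1: "star (star x b) a = star (star x a) b" using V unfolding virtual_flat_biquandle_def by metis
lemma A2: "circ (circ x b) a = circ (circ x a) b" using V unfolding virtual_flat_biquandle_def by metis
lemma A3: "star (circ x b) a = circ (star x a) b" using V unfolding virtual_flat_biquandle_def by metis
lemma A4: "star x (circ a b) = star x a" "star x (star a b) = star x a" using V unfolding virtual_flat_biquandle_def by metis+
lemma A5: "circ x (star a b) = circ x a" "circ x (circ a b) = circ x a" using V unfolding virtual_flat_biquandle_def by metis+
lemma A6: "circ (star x a) a = x" "star (circ x a) a = x" using V unfolding virtual_flat_biquandle_def by metis+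

lemma pair_lo:
  assumes j: "j < length p"
  shows "TT star circ (p @ a # b # q) j + TT star circ (p @ circ b a # star a b # q) j
         \<in> degen_chains star circ (length p + 1 + length q)"
proof -
  define c where "c = p ! j"
  define A where "A = map (\<lambda>x. star x c) (take j p) @ drop (Suc j) p"
  define B where "B = take j p @ map (\<lambda>x. circ x c) (drop (Suc j) p)"
  define Q where "Q = map (\<lambda>x. circ x c) q"
  have lA: "length A + 2 + length q = length p + 1 + length q" using j by (simp add: A_def)
  have lB: "length B + 2 + length Q = length p + 1 + length q" using j by (simp add: B_def Q_def)
  have e1: "circ (circ b a) c = circ (circ b c) (circ a c)" by (simp add: A5 A2)
  have e2: "circ (star a b) c = star (circ a c) (circ b c)" by (simp add: A4 A3)
  have "TT star circ (p @ a # b # q) j + TT star circ (p @ circ b a # star a b # q) j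
     = frag_cmul ((-1)^(j+1)) ((frag_of (A @ a # b # q) + frag_of (A @ circ b a # star a b # q))
        - (frag_of (B @ circ a c # circ b c # Q) + frag_of (B @ circ (circ b c) (circ a c) # star (circ a c) (circ b c) # Q)))"
    unfolding TT_def using j
    by (simp only: t1 t2 A_def[symmetric] B_def[symmetric] Q_def[symmetric] c_def[symmetric] e1 e2 cmul_comb)
  also have "\<dots> \<in> degen_chains star circ (length p + 1 + length q)"
    apply (rule Z_sign, rule Z_diff)
    using GM[OF lA] GM[OF lB] j by (auto intro!: Z_incl)
  finally show ?thesis .
qed

lemma pair_hi:
  assumes k: "k < length q" and j: "j = length p + 2 + k"
  shows "TT star circ (p @ a # b # q) j + TT star circ (p @ circ b a # star a b # q) j
         \<in> degen_chains star circ (length p + 1 + length q)"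
proof -
  define c where "c = q ! k"
  define A where "A = map (\<lambda>x. star x c) p"
  define Q where "Q = map (\<lambda>x. star x c) (take k q) @ drop (Suc k) q"
  define B where "B = take k q @ map (\<lambda>x. circ x c) (drop (Suc k) q)"
  have lA: "length A + 2 + length Q = length p + 1 + length q" using k by (simp add: A_def Q_def)
  have lB: "length p + 2 + length B = length p + 1 + length q" using k by (simp add: B_def)
  have e1: "star (circ b a) c = circ (star b c) (star a c)" by (simp add: A5 A3)
  have e2: "star (star a b) c = star (star a c) (star b c)" by (simp add: A4 A1)
  have "TT star circ (p @ a # b # q) j + TT star circ (p @ circ b a # star a b # q) j
     = frag_cmul ((-1)^(j+1)) ((frag_of (A @ star a c # star b c # Q) + frag_of (A @ circ (star b c) (star a c) # star (star a c) (star b c) # Q))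
        - (frag_of (p @ a # b # B) + frag_of (p @ circ b a # star a b # B)))"
    unfolding TT_def using j k
    by (simp only: t3 t4 A_def[symmetric] B_def[symmetric] Q_def[symmetric] c_def[symmetric] e1 e2 cmul_comb)
  also have "\<dots> \<in> degen_chains star circ (length p + 1 + length q)"
    apply (rule Z_sign, rule Z_diff)
    using GM[OF lA] GM[OF lB] j k by (auto intro!: Z_incl)
  finally show ?thesis .
qed

lemma pair_mid:
  "TT star circ (p @ a # b # q) (length p) + TT star circ (p @ circ b a # star a b # q) (length p)
   + (TT star circ (p @ a # b # q) (Suc (length p)) + TT star circ (p @ circ b a # star a b # q) (Suc (length p))) = 0"
proof -
  define s :: int where "s = (-1) ^ (length p + 1)"
  have s2: "(-1::int) ^ (Suc (length p) + 1) = - s" by (simp add: s_def)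
  define X where "X = frag_of (map (\<lambda>x. star x a) p @ b # q) - frag_of (p @ circ b a # map (\<lambda>x. circ x a) q)"
  define Y where "Y = frag_of (map (\<lambda>x. star x b) p @ star a b # q) - frag_of (p @ a # map (\<lambda>x. circ x b) q)"
  have m1: "map (\<lambda>x. star x (circ b a)) p = map (\<lambda>x. star x b) p" by (simp add: A4)
  have m2: "map (\<lambda>x. circ x (circ b a)) q = map (\<lambda>x. circ x b) q" by (simp add: A5)
  have m3: "map (\<lambda>x. star x (star a b)) p = map (\<lambda>x. star x a) p" by (simp add: A4)
  have m4: "map (\<lambda>x. circ x (star a b)) q = map (\<lambda>x. circ x a) q" by (simp add: A5)
  have m5: "circ (star a b) (circ b a) = a" by (simp add: A5 A6)
  have m6: "star (circ b a) (star a b) = b" by (simp add: A4 A6)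
  have "TT star circ (p @ a # b # q) (length p) = frag_cmul s X"
    by (simp add: TT_def t5 t6 s_def X_def)
  moreover have "TT star circ (p @ circ b a # star a b # q) (length p) = frag_cmul s Y"
    by (simp add: TT_def t5 t6 s_def Y_def m1 m2 m5)
  moreover have "TT star circ (p @ a # b # q) (Suc (length p)) = - frag_cmul s Y"
    by (simp only: TT_def t7 t8 s2 Y_def minus_frag_cmul)
  moreover have "TT star circ (p @ circ b a # star a b # q) (Suc (length p)) = - frag_cmul s X"
    by (simp only: TT_def t7 t8 s2 X_def m3 m4 m6 minus_frag_cmul)
  ultimately show ?thesis by (simp only: cancel4)
qed

lemma key:
  "frag_extend (bd_tuple star circ) (frag_of (p @ a # b # q) + frag_of (p @ circ b a # star a b # q))
   \<in> degen_chains star circ (length p + 1 + length q)"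
proof -
  define n where "n = length p + 2 + length q"
  define F where "F j = TT star circ (p @ a # b # q) j + TT star circ (p @ circ b a # star a b # q) j" for j
  have "frag_extend (bd_tuple star circ) (frag_of (p @ a # b # q) + frag_of (p @ circ b a # star a b # q))
      = sum F {..<n}"
    by (simp add: frag_extend_add bd_TT F_def n_def sum.distrib)
  also have "{..<n} = insert (length p) (insert (Suc (length p)) ({..<n} - {length p, Suc (length p)}))"
    by (auto simp: n_def)
  also have "sum F \<dots> = (F (length p) + F (Suc (length p))) + sum F ({..<n} - {length p, Suc (length p)})"
    by (simp add: add.assoc)
  also have "F (length p) + F (Suc (length p)) = 0"
    unfolding F_def by (rule pair_mid)
  also have "0 + sum F ({..<n} - {length p, Suc (length p)}) \<in> degen_chains star circ (length p + 1 + length q)"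
  proof -
  have "sum F ({..<n} - {length p, Suc (length p)}) \<in> degen_chains star circ (length p + 1 + length q)"
  proof (rule Z_sum)
    show "finite ({..<n} - {length p, Suc (length p)})" by simp
  next
    fix j assume j: "j \<in> {..<n} - {length p, Suc (length p)}"
    show "F j \<in> degen_chains star circ (length p + 1 + length q)"
    proof (cases "j < length p")
      case True then show ?thesis unfolding F_def by (rule pair_lo)
    next
      case False
      then have "j = length p + 2 + (j - length p - 2)" "j - length p - 2 < length q"
        using j by (auto simp: n_def)
      then show ?thesis unfolding F_def by (rule pair_hi[rotated])
    qed
  qed
  then show ?thesis by simp
  qed
  finally show ?thesis .
qed

end


theorem lemma5p2:
  fixes star circ :: "'a \<Rightarrow> 'a \<Rightarrow> 'a"
  assumes "virtual_flat_biquandle star circ"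
  shows "\<forall>n. \<forall>c \<in> degen_chains star circ n.
           boundary star circ n c \<in> degen_chains star circ (n - 1)"
proof (intro allI ballI)
  fix n c assume c: "c \<in> degen_chains star circ n"
  show "boundary star circ n c \<in> degen_chains star circ (n - 1)"
  proof (cases "n \<le> 1")
    case True then show ?thesis by (simp add: boundary_def Z_0)
  next
    case False
    then have n2: "n \<ge> 2" by simp
    have sub: "degen_gens star circ n \<subseteq> carrier (chain_group n)" using D_carrier[of n star circ] n2 by auto
    have cg: "c \<in> generate (chain_group n) (degen_gens star circ n)" using c n2 by (simp add: Z_gen)
    have bd: "boundary star circ n x = frag_extend (bd_tuple star circ) x" for x
      using n2 by (simp add: boundary_def)
    have gens: "boundary star circ n h \<in> degen_chains star circ (n - 1)" if h: "h \<in> degen_gens star circ n" for h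
    proof -
      have "\<exists>xs i. h = frag_of xs + frag_of (take i xs @ [circ (xs ! Suc i) (xs ! i), star (xs ! i) (xs ! Suc i)] @ drop (Suc (Suc i)) xs)
         \<and> length xs = n \<and> Suc i < n"
        using h unfolding degen_gens_def by (simp only: mem_Collect_eq)
      then obtain xs i where hx: "h = frag_of xs + frag_of (take i xs @ [circ (xs ! Suc i) (xs ! i), star (xs ! i) (xs ! Suc i)] @ drop (Suc (Suc i)) xs)"
        and l: "length xs = n" and i: "Suc i < n"
        by blast
      define p where "p = take i xs"
      define a where "a = xs ! i"
      define b where "b = xs ! Suc i"
      define q where "q = drop (Suc (Suc i)) xs"
      have d1: "drop i xs = a # drop (Suc i) xs" using i l unfolding a_def by (simp add: Cons_nth_drop_Suc)
      have d2: "drop (Suc i) xs = b # q" using i l unfolding b_def q_def by (simp add: Cons_nth_drop_Suc)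
      have xs: "xs = p @ a # b # q"
      proof -
        have "xs = take i xs @ drop i xs" by (rule append_take_drop_id[symmetric])
        also have "\<dots> = take i xs @ a # b # q" by (simp only: d1 d2)
        finally show ?thesis unfolding p_def .
      qed
      have "h = frag_of xs + frag_of (p @ [circ b a, star a b] @ q)"
        using hx by (simp only: p_def[symmetric] a_def[symmetric] b_def[symmetric] q_def[symmetric])
      then have hh: "h = frag_of (p @ a # b # q) + frag_of (p @ circ b a # star a b # q)"
        by (subst (asm) xs) simp
      have "n - 1 = length p + 1 + length q" using l xs by simp
      then show ?thesis using key[OF assms, of p a b q] by (simp add: bd hh)
    qed
    from cg show ?thesis
    proof (induction rule: generate.induct)
      case one
      then show ?case using n2 by (simp add: bd chain_group_def Z_0)
    next
      case (incl h)
      then show ?case by (rule gens)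
    next
      case (inv h)
      then have "h \<in> carrier (chain_group n)" using sub by auto
      then have "inv\<^bsub>chain_group n\<^esub> h = - h" using n2 by (simp add: chain_group_def)
      then show ?case using gens[OF inv] by (simp add: bd frag_extend_minus Z_neg)
    next
      case (eng h1 h2)
      have "h1 \<otimes>\<^bsub>chain_group n\<^esub> h2 = h1 + h2" using n2 by (simp add: chain_group_def)
      then show ?case using eng by (simp add: bd frag_extend_add Z_add)
    qed
  qed
qed

end
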